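(* For every integer $n\ge 1$, $7 P_{n}^2= -3 P_{n-1}^2+2 P_{n}P_{n-1}-4P_{n+1}^{2}-2 P_{2 n}+2 P_{n} P_{n+1} +3 P_{2 n-1}+4 P_{2 n+1}$, where $P_k$ denotes the $k$-th Pell number.
   Context: The Pell numbers are defined by $P_0=0$, $P_1=1$, $P_k=2P_{k-1}+P_{k-2}$ for $k\ge 2$. *)

theory Defs
  imports Main
begin

fun pell :: "nat \<Rightarrow> int" where
  "pell 0 = 0"
| "pell (Suc 0) = 1"
| "pell (Suc (Suc k)) = 2 * pell (Suc k) + pell k"

end

theory Submission
  imports Defs
begin

lemma pell_add: "pell (a + b + 1) = pell (a + 1) * pell (b + 1) + pell a * pell b"
proof (induction a arbitrary: b)
  case 0 then show ?case by simp
next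
  case (Suc a)
  have "pell (Suc a + b + 1) = pell (a + Suc b + 1)" by simp
  also have "\<dots> = pell (Suc a) * pell (Suc (Suc b)) + pell a * pell (Suc b)"
    using Suc.IH[of "Suc b"] by simp
  also have "\<dots> = pell (Suc (Suc a)) * pell (Suc b) + pell (Suc a) * pell b"
    by (simp only: pell.simps) (simp add: algebra_simps)
  finally show ?case by simp
qed

theorem proposition7p5:
  fixes n :: nat
  assumes "n \<ge> 1"
  shows "7 * (pell n)^2 = - 3 * (pell (n - 1))^2 + 2 * pell n * pell (n - 1)
           - 4 * (pell (n + 1))^2 - 2 * pell (2 * n) + 2 * pell n * pell (n + 1)
           + 3 * pell (2 * n - 1) + 4 * pell (2 * n + 1)"
proof -
  obtain m where n: "n = Suc m" using assms by (cases n) auto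
  have e1: "pell (2*n - 1) = pell (Suc m) * pell (Suc m) + pell m * pell m"
  proof -
    have "2*n-1 = m + m + 1" using n by simp
    then show ?thesis using pell_add[of m m] by simp
  qed
  have e2: "pell (2*n) = pell (Suc (Suc m)) * pell (Suc m) + pell (Suc m) * pell m"
  proof -
    have "2*n = Suc m + m + 1" using n by simp
    then show ?thesis using pell_add[of "Suc m" m] by (simp del: pell.simps)
  qed
  have e3: "pell (2*n+1) = pell (Suc (Suc m)) * pell (Suc (Suc m)) + pell (Suc m) * pell (Suc m)"
  proof -
    have "2*n+1 = Suc m + Suc m + 1" using n by simp
    then show ?thesis using pell_add[of "Suc m" "Suc m"] by (simp del: pell.simps)
  qed
  have n1: "n + 1 = Suc (Suc m)" "n - 1 = m" using n by auto
  have c: "pell (Suc (Suc m)) = 2 * pell (Suc m) + pell m" by simp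
  have alg: "7 * (pell (Suc m))^2 = - 3 * (pell m)^2 + 2 * pell (Suc m) * pell m
           - 4 * (2 * pell (Suc m) + pell m)^2 - 2 * ((2 * pell (Suc m) + pell m) * pell (Suc m) + pell (Suc m) * pell m) + 2 * pell (Suc m) * (2 * pell (Suc m) + pell m)
           + 3 * (pell (Suc m) * pell (Suc m) + pell m * pell m) + 4 * ((2 * pell (Suc m) + pell m)*(2 * pell (Suc m) + pell m) + pell (Suc m) * pell (Suc m))"
    by (simp add: algebra_simps power2_eq_square del: pell.simps)
  show ?thesis unfolding e1 e2 e3 n1 c using alg n by (simp del: pell.simps)
qed

end
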